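(* Let $G=(V,E)$ be an $n$-vertex graph of maximum degree $\Delta$ with $V=A\cup B$, $A\cap B=\emptyset$, and let $d\ge1$ be such that every vertex of $A$ has degree at most $d$ in $G$. Suppose that the induced subgraph $G(A)$ is given a proper edge coloring with $O(d)$ colors and the induced subgraph $G(B)$ is given a proper edge coloring with $\Delta+O(d)$ colors (colors taken from a common palette). Then a proper edge coloring of all of $G$ using $\Delta+O(d)$ colors can be computed by a deterministic distributed algorithm in the LOCAL model within $O(d)$ rounds.
   Context: LOCAL model: the input graph is the communication network; each vertex is a processor with a unique ID of $O(\log n)$ bits and unbounded local computation; computation proceeds in synchronous rounds, in each of which every vertex may send a message of arbitrary size to each neighbor; running time is the number of rounds until all vertices terminate. Global parameters ($\Delta$, $d$) are known to all vertices, and each vertex knows whether it is in $A$ or $B$. In an edge coloring, edges sharing an endpoint receive distinct colors, and both endpoints of an edge know its color. *)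

theory Defs
  imports Main "HOL-Library.FSet"
begin

definition simple_graph :: "('v \<Rightarrow> 'v \<Rightarrow> bool) \<Rightarrow> 'v set \<Rightarrow> bool" where
  "simple_graph E V \<longleftrightarrow> finite V \<and> (\<forall>u v. E u v \<longrightarrow> u \<in> V \<and> v \<in> V) \<and>
     (\<forall>u v. E u v \<longrightarrow> E v u) \<and> (\<forall>v. \<not> E v v)"

definition nbrs :: "('v \<Rightarrow> 'v \<Rightarrow> bool) \<Rightarrow> 'v set \<Rightarrow> 'v \<Rightarrow> 'v set" where
  "nbrs E V v = {u \<in> V. E v u}"

definition degree :: "('v \<Rightarrow> 'v \<Rightarrow> bool) \<Rightarrow> 'v set \<Rightarrow> 'v \<Rightarrow> nat" where
  "degree E V v = card (nbrs E V v)"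

definition max_degree :: "('v \<Rightarrow> 'v \<Rightarrow> bool) \<Rightarrow> 'v set \<Rightarrow> nat \<Rightarrow> bool" where
  "max_degree E V \<Delta> \<longleftrightarrow> (\<forall>v\<in>V. degree E V v \<le> \<Delta>) \<and> (V \<noteq> {} \<longrightarrow> (\<exists>v\<in>V. degree E V v = \<Delta>))"

definition proper_edge_col_on ::
  "('v \<Rightarrow> 'v \<Rightarrow> bool) \<Rightarrow> 'v set \<Rightarrow> 'v set \<Rightarrow> ('v \<Rightarrow> 'v \<Rightarrow> nat) \<Rightarrow> nat \<Rightarrow> bool" where
  "proper_edge_col_on E V S col k \<longleftrightarrow>
     (\<forall>u\<in>S. \<forall>v\<in>S. E u v \<longrightarrow> col u v = col v u \<and> col u v < k) \<and>
     (\<forall>v\<in>S. \<forall>u\<in>S. \<forall>w\<in>S. E v u \<and> E v w \<and> u \<noteq> w \<longrightarrow> col v u \<noteq> col v w)"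

text \<open>LOCAL model, full-information formulation.  The knowledge ("view") of a vertex after t
  rounds consists of its ID, whether it lies in A, and, for every incident edge, the input
  colour of that edge (if the edge lies inside G(A) or inside G(B); None otherwise) together with
  the view of the corresponding neighbour after t-1 rounds.  Any deterministic t-round LOCAL
  algorithm computes its outputs as a function of this view (and the global parameters).\<close>

datatype view = View nat bool "(nat option \<times> view) fset"

definition edge_label :: "'v set \<Rightarrow> ('v \<Rightarrow> 'v \<Rightarrow> nat) \<Rightarrow> 'v \<Rightarrow> 'v \<Rightarrow> nat option" where
  "edge_label A col v u = (if (v \<in> A) = (u \<in> A) then Some (col v u) else None)"

fun local_view ::
  "('v \<Rightarrow> 'v \<Rightarrow> bool) \<Rightarrow> 'v set \<Rightarrow> 'v set \<Rightarrow> ('v \<Rightarrow> 'v \<Rightarrow> nat) \<Rightarrow> ('v \<Rightarrow> nat) \<Rightarrow> nat \<Rightarrow> 'v \<Rightarrow> view" where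
  "local_view E V A col ID 0 v = View (ID v) (v \<in> A) {||}"
| "local_view E V A col ID (Suc t) v =
     View (ID v) (v \<in> A)
       (Abs_fset ((\<lambda>u. (edge_label A col v u, local_view E V A col ID t u)) ` nbrs E V v))"

text \<open>An algorithm maps (\<Delta>, d, own view, ID of a neighbour) to the colour it outputs for the
  edge to that neighbour.\<close>
definition local_output_ok ::
  "(nat \<Rightarrow> nat \<Rightarrow> view \<Rightarrow> nat \<Rightarrow> nat) \<Rightarrow> nat \<Rightarrow>
   ('v \<Rightarrow> 'v \<Rightarrow> bool) \<Rightarrow> 'v set \<Rightarrow> 'v set \<Rightarrow> ('v \<Rightarrow> 'v \<Rightarrow> nat) \<Rightarrow> ('v \<Rightarrow> nat) \<Rightarrow>
   nat \<Rightarrow> nat \<Rightarrow> nat \<Rightarrow> bool" where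
  "local_output_ok alg r E V A col ID \<Delta> d k \<longleftrightarrow>
     (let out = (\<lambda>v u. alg \<Delta> d (local_view E V A col ID r v) (ID u)) in
       (\<forall>u v. E u v \<longrightarrow> out u v = out v u \<and> out u v < k) \<and>
       (\<forall>v u w. E v u \<and> E v w \<and> u \<noteq> w \<longrightarrow> out v u \<noteq> out v w))"

end

theory Submission
  imports Defs
begin
fun vid :: "view \<Rightarrow> nat" where "vid (View i a S) = i"
fun vA :: "view \<Rightarrow> bool" where "vA (View i a S) = a"
fun vk :: "view \<Rightarrow> (nat option \<times> view) set" where "vk (View i a S) = fset S"

definition Akids :: "view \<Rightarrow> view set" where "Akids w = {x. \<exists>l. (l,x) \<in> vk w \<and> vA x}"
definition Bkids :: "view \<Rightarrow> view set" where "Bkids w = {x. \<exists>l. (l,x) \<in> vk w \<and> \<not> vA x}"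
definition Bcols :: "view \<Rightarrow> nat set" where "Bcols w = {c. \<exists>x. (Some c, x) \<in> vk w \<and> \<not> vA x}"
definition rankv :: "view \<Rightarrow> nat \<Rightarrow> nat" where
  "rankv w i = card (vid ` {x \<in> Bkids w. vid x < i})"
definition lexl :: "nat \<Rightarrow> nat \<Rightarrow> nat \<Rightarrow> nat \<Rightarrow> bool" where
  "lexl j' i' j i \<longleftrightarrow> j' < j \<or> (j' = j \<and> i' < i)"

function Fv :: "nat \<Rightarrow> view \<Rightarrow> nat \<Rightarrow> nat" where
  "Fv j wb ia = (LEAST c. c \<notin> Bcols wb
     \<union> (\<lambda>wa'. Fv (rankv wa' (vid wb)) wb (vid wa')) ` {wa' \<in> Akids wb. lexl (rankv wa' (vid wb)) (vid wa') j ia}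
     \<union> (\<lambda>p. Fv (rankv (fst p) (vid (snd p))) (snd p) ia) `
         {p. fst p \<in> Akids wb \<and> vid (fst p) = ia \<and> snd p \<in> Bkids (fst p) \<and> vid (snd p) \<noteq> vid wb \<and> rankv (fst p) (vid (snd p)) < j})"
  by pat_completeness auto
termination
  by (relation "inv_image (less_than <*lex*> less_than) (\<lambda>(j,wb,ia). (j, ia))")
     (auto simp: lexl_def)

declare Fv.simps[simp del]
lemma least_le_card:
  fixes S :: "nat set" assumes "finite S" shows "(LEAST c. c \<notin> S) \<le> card S"
proof -
  have "\<not> {0..card S} \<subseteq> S"
  proof
    assume "{0..card S} \<subseteq> S"
    then have "card {0..card S} \<le> card S" using assms card_mono by blast
    then show False by simp
  qed
  then obtain c where "c \<in> {0..card S}" "c \<notin> S" by blast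
  then have "c \<le> card S" "c \<notin> S" by auto
  then show ?thesis by (meson Least_le order_trans)
qed

lemma least_notin:
  fixes S :: "nat set" assumes "finite S" shows "(LEAST c. c \<notin> S) \<notin> S"
proof -
  obtain c where "c \<notin> S" using assms infinite_UNIV_nat ex_new_if_finite by blast
  then show ?thesis by (rule LeastI)
qed

locale G =
  fixes E :: "'v \<Rightarrow> 'v \<Rightarrow> bool" and V A :: "'v set" and col :: "'v \<Rightarrow> 'v \<Rightarrow> nat" and ID :: "'v \<Rightarrow> nat" and \<Delta> d c :: nat
  assumes sg: "simple_graph E V" and md: "max_degree E V \<Delta>" and AV: "A \<subseteq> V"
    and d1: "d \<ge> 1" and degA: "\<forall>v\<in>A. degree E V v \<le> d" and inj: "inj_on ID V"
    and pA: "proper_edge_col_on E V A col (c*d)"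
    and pB: "proper_edge_col_on E V (V-A) col (\<Delta> + c*d)"
begin

abbreviation "lv t v \<equiv> local_view E V A col ID t v"
abbreviation "nb v \<equiv> nbrs E V v"

lemma finV: "finite V" using sg by (simp add: simple_graph_def)
lemma EV: "E u v \<Longrightarrow> u \<in> V \<and> v \<in> V" using sg by (simp add: simple_graph_def)
lemma Esym: "E u v \<Longrightarrow> E v u" using sg by (simp add: simple_graph_def)
lemma Eirr: "\<not> E v v" using sg by (simp add: simple_graph_def)
lemma nb_fin: "finite (nb v)" using finV by (simp add: nbrs_def)
lemma nb_iff: "u \<in> nb v \<longleftrightarrow> E v u" using EV by (auto simp: nbrs_def)

lemma vid_lv[simp]: "vid (lv t v) = ID v" by (cases t) auto
lemma vA_lv[simp]: "vA (lv t v) = (v \<in> A)" by (cases t) auto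
lemma vk_lv: "vk (lv (Suc t) v) = (\<lambda>u. (edge_label A col v u, lv t u)) ` nb v"
  using nb_fin by (simp add: Abs_fset_inverse)

declare local_view.simps(2)[simp del]

lemma IDeq: "u \<in> V \<Longrightarrow> u' \<in> V \<Longrightarrow> ID u = ID u' \<Longrightarrow> u = u'"
  using inj by (auto simp: inj_on_def)

lemma Akids_lv: "Akids (lv (Suc t) v) = lv t ` (nb v \<inter> A)"
  unfolding Akids_def vk_lv by auto
lemma Bkids_lv: "Bkids (lv (Suc t) v) = lv t ` (nb v - A)"
  unfolding Bkids_def vk_lv by auto
lemma Bcols_lv: "v \<notin> A \<Longrightarrow> Bcols (lv (Suc t) v) = (\<lambda>u. col v u) ` (nb v - A)"
proof -
  assume v: "v \<notin> A"
  show ?thesis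
    unfolding Bcols_def vk_lv
  proof (auto simp: edge_label_def v)
    fix u assume "u \<in> nb v" "u \<notin> A"
    then show "\<exists>x. (Some (col v u), x) \<in> (\<lambda>x. (if x \<notin> A then Some (col v x) else None, lv t x)) ` nb v \<and> \<not> vA x"
      by (intro exI[of _ "lv t u"]) force
  qed
qed

definition rk :: "'v \<Rightarrow> 'v \<Rightarrow> nat" where
  "rk a b = card (ID ` {u \<in> nb a - A. ID u < ID b})"

lemma rankv_lv: "rankv (lv (Suc t) a) x = card (ID ` {u \<in> nb a - A. ID u < x})"
proof -
  have "{w \<in> Bkids (lv (Suc t) a). vid w < x} = lv t ` {u \<in> nb a - A. ID u < x}"
    unfolding Bkids_lv by auto
  then show ?thesis unfolding rankv_def by (simp add: image_image)
qed

lemma rankv_rk: "rankv (lv (Suc t) a) (ID b) = rk a b"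
  unfolding rk_def by (rule rankv_lv)

lemma Fv_unfold:
  assumes a: "a \<in> A" and b: "b \<notin> A" and ba: "E b a"
  shows "Fv j (lv (Suc (Suc s)) b) (ID a) = (LEAST c. c \<notin> (\<lambda>u. col b u)`(nb b - A)
    \<union> (\<lambda>a'. Fv (rk a' b) (lv (Suc (Suc s)) b) (ID a')) ` {a' \<in> nb b \<inter> A. lexl (rk a' b) (ID a') j (ID a)}
    \<union> (\<lambda>b'. Fv (rk a b') (lv s b') (ID a)) ` {b' \<in> nb a - A. b' \<noteq> b \<and> rk a b' < j})"
proof -
  let ?wb = "lv (Suc (Suc s)) b"
  have X1: "{wa' \<in> Akids ?wb. lexl (rankv wa' (vid ?wb)) (vid wa') j (ID a)}
      = lv (Suc s) ` {a' \<in> nb b \<inter> A. lexl (rk a' b) (ID a') j (ID a)}"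
    unfolding Akids_lv by (auto simp: rankv_rk)
  have aV: "a \<in> V" and bV: "b \<in> V" using EV ba by auto
  have X2: "{p. fst p \<in> Akids ?wb \<and> vid (fst p) = ID a \<and> snd p \<in> Bkids (fst p) \<and>
       vid (snd p) \<noteq> vid ?wb \<and> rankv (fst p) (vid (snd p)) < j}
     = (\<lambda>b'. (lv (Suc s) a, lv s b')) ` {b' \<in> nb a - A. b' \<noteq> b \<and> rk a b' < j}"
  proof (rule set_eqI, rule iffI)
    fix p assume p: "p \<in> {p. fst p \<in> Akids ?wb \<and> vid (fst p) = ID a \<and> snd p \<in> Bkids (fst p) \<and>
       vid (snd p) \<noteq> vid ?wb \<and> rankv (fst p) (vid (snd p)) < j}"
    then obtain a'' where a'': "a'' \<in> nb b \<inter> A" "fst p = lv (Suc s) a''" "ID a'' = ID a"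
      unfolding Akids_lv by auto
    then have "a'' = a" using IDeq aV AV by auto
    with a'' p have sp: "snd p \<in> lv s ` (nb a - A)" "vid (snd p) \<noteq> ID b"
      "rankv (lv (Suc s) a) (vid (snd p)) < j"
      by (auto simp: Bkids_lv[symmetric])
    then obtain b' where "b' \<in> nb a - A" "snd p = lv s b'" "ID b' \<noteq> ID b" "rk a b' < j"
      by (auto simp: rankv_rk)
    moreover then have "b' \<noteq> b" by auto
    ultimately show "p \<in> (\<lambda>b'. (lv (Suc s) a, lv s b')) ` {b' \<in> nb a - A. b' \<noteq> b \<and> rk a b' < j}"
      using \<open>fst p = lv (Suc s) a''\<close> \<open>a'' = a\<close> by (cases p) auto
  next
    fix p assume "p \<in> (\<lambda>b'. (lv (Suc s) a, lv s b')) ` {b' \<in> nb a - A. b' \<noteq> b \<and> rk a b' < j}"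
    then obtain b' where b': "b' \<in> nb a - A" "b' \<noteq> b" "rk a b' < j" "p = (lv (Suc s) a, lv s b')" by auto
    have "ID b' \<noteq> ID b" using IDeq b' bV EV nb_iff by blast
    moreover have "a \<in> nb b \<inter> A" using a ba nb_iff by auto
    ultimately show "p \<in> {p. fst p \<in> Akids ?wb \<and> vid (fst p) = ID a \<and> snd p \<in> Bkids (fst p) \<and>
       vid (snd p) \<noteq> vid ?wb \<and> rankv (fst p) (vid (snd p)) < j}"
      using b' by (auto simp: rankv_rk Akids_lv Bkids_lv)
  qed
  show ?thesis
    apply (subst Fv.simps)
    apply (unfold X1 X2 image_image Bcols_lv[OF b])
    apply (simp only: vid_lv fst_conv snd_conv rankv_rk)
    done
qed

lemma Fv_indep_aux:
  "\<forall>a b t t'. (rk a b, ID a) = x \<longrightarrow> a \<in> A \<longrightarrow> b \<notin> A \<longrightarrow> E b a \<longrightarrow>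
     2*rk a b + 2 \<le> t \<longrightarrow> 2*rk a b + 2 \<le> t' \<longrightarrow>
     Fv (rk a b) (lv t b) (ID a) = Fv (rk a b) (lv t' b) (ID a)"
proof (induction x rule: wf_induct[OF wf_lex_prod[OF wf_less_than wf_less_than]])
  case (1 x)
  show ?case
  proof (intro allI impI)
    note IH = 1[rule_format, OF _ refl]
    fix a b t t'
    assume x: "(rk a b, ID a) = x" and a: "a \<in> A" and b: "b \<notin> A" and ba: "E b a"
      and t: "2*rk a b + 2 \<le> t" and t': "2*rk a b + 2 \<le> t'"
    obtain s where s: "t = Suc (Suc s)" using t by (intro that[of "t - 2"]) simp
    obtain s' where s': "t' = Suc (Suc s')" using t' by (intro that[of "t' - 2"]) simp
    have e1: "(\<lambda>a'. Fv (rk a' b) (lv t b) (ID a')) ` {a' \<in> nb b \<inter> A. lexl (rk a' b) (ID a') (rk a b) (ID a)}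
        = (\<lambda>a'. Fv (rk a' b) (lv t' b) (ID a')) ` {a' \<in> nb b \<inter> A. lexl (rk a' b) (ID a') (rk a b) (ID a)}"
    proof (rule image_cong[OF refl])
      fix a' assume a': "a' \<in> {a' \<in> nb b \<inter> A. lexl (rk a' b) (ID a') (rk a b) (ID a)}"
      then have "((rk a' b, ID a'), x) \<in> less_than <*lex*> less_than" using x by (auto simp: lexl_def)
      moreover have "rk a' b \<le> rk a b" using a' by (auto simp: lexl_def)
      ultimately show "Fv (rk a' b) (lv t b) (ID a') = Fv (rk a' b) (lv t' b) (ID a')"
        using a' b t t' nb_iff by (intro IH) auto
    qed
    have e2: "(\<lambda>b'. Fv (rk a b') (lv s b') (ID a)) ` {b' \<in> nb a - A. b' \<noteq> b \<and> rk a b' < rk a b}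
       = (\<lambda>b'. Fv (rk a b') (lv s' b') (ID a)) ` {b' \<in> nb a - A. b' \<noteq> b \<and> rk a b' < rk a b}"
    proof (rule image_cong[OF refl])
      fix b' assume b': "b' \<in> {b' \<in> nb a - A. b' \<noteq> b \<and> rk a b' < rk a b}"
      then have "((rk a b', ID a), x) \<in> less_than <*lex*> less_than" using x by auto
      moreover have "E b' a" using b' nb_iff Esym by auto
      moreover have "2 * rk a b' + 2 \<le> s" "2 * rk a b' + 2 \<le> s'" using b' s s' t t' by auto
      ultimately show "Fv (rk a b') (lv s b') (ID a) = Fv (rk a b') (lv s' b') (ID a)"
        using a b' by (intro IH) auto
    qed
    show "Fv (rk a b) (lv t b) (ID a) = Fv (rk a b) (lv t' b) (ID a)"
      unfolding s s' Fv_unfold[OF a b ba] e1[unfolded s s'] e2 by (rule refl)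
  qed
qed

lemma Fv_indep: "a \<in> A \<Longrightarrow> b \<notin> A \<Longrightarrow> E b a \<Longrightarrow> 2*rk a b + 2 \<le> t \<Longrightarrow> 2*rk a b + 2 \<le> t' \<Longrightarrow>
   Fv (rk a b) (lv t b) (ID a) = Fv (rk a b) (lv t' b) (ID a)"
  using Fv_indep_aux by blast

definition H :: "'v \<Rightarrow> 'v \<Rightarrow> nat" where
  "H a b = Fv (rk a b) (lv (2*rk a b + 2) b) (ID a)"

lemma Fv_H: "a \<in> A \<Longrightarrow> b \<notin> A \<Longrightarrow> E b a \<Longrightarrow> 2*rk a b + 2 \<le> t \<Longrightarrow>
   Fv (rk a b) (lv t b) (ID a) = H a b"
  unfolding H_def by (rule Fv_indep) auto

definition Forb :: "'v \<Rightarrow> 'v \<Rightarrow> nat set" where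
  "Forb a b = (\<lambda>u. col b u)`(nb b - A)
    \<union> (\<lambda>a'. H a' b) ` {a' \<in> nb b \<inter> A. lexl (rk a' b) (ID a') (rk a b) (ID a)}
    \<union> (\<lambda>b'. H a b') ` {b' \<in> nb a - A. b' \<noteq> b \<and> rk a b' < rk a b}"

lemma H_eq: assumes a: "a \<in> A" and b: "b \<notin> A" and ba: "E b a"
  shows "H a b = (LEAST c. c \<notin> Forb a b)"
proof -
  define t where "t = 2*rk a b + 2"
  obtain s where s: "t = Suc (Suc s)" unfolding t_def by simp
  have e1: "(\<lambda>a'. Fv (rk a' b) (lv t b) (ID a')) ` {a' \<in> nb b \<inter> A. lexl (rk a' b) (ID a') (rk a b) (ID a)}
      = (\<lambda>a'. H a' b) ` {a' \<in> nb b \<inter> A. lexl (rk a' b) (ID a') (rk a b) (ID a)}"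
  proof (rule image_cong[OF refl])
    fix a' assume a': "a' \<in> {a' \<in> nb b \<inter> A. lexl (rk a' b) (ID a') (rk a b) (ID a)}"
    then have "rk a' b \<le> rk a b" by (auto simp: lexl_def)
    then show "Fv (rk a' b) (lv t b) (ID a') = H a' b"
      using a' b nb_iff t_def by (intro Fv_H) auto
  qed
  have e2: "(\<lambda>b'. Fv (rk a b') (lv s b') (ID a)) ` {b' \<in> nb a - A. b' \<noteq> b \<and> rk a b' < rk a b}
     = (\<lambda>b'. H a b') ` {b' \<in> nb a - A. b' \<noteq> b \<and> rk a b' < rk a b}"
  proof (rule image_cong[OF refl])
    fix b' assume b': "b' \<in> {b' \<in> nb a - A. b' \<noteq> b \<and> rk a b' < rk a b}"
    then show "Fv (rk a b') (lv s b') (ID a) = H a b'"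
      using a s t_def nb_iff Esym by (intro Fv_H) auto
  qed
  have "H a b = Fv (rk a b) (lv t b) (ID a)" unfolding H_def t_def ..
  also have "\<dots> = (LEAST c. c \<notin> Forb a b)"
    unfolding s Fv_unfold[OF a b ba] Forb_def e1[unfolded s] e2 by (rule refl)
  finally show ?thesis .
qed

lemma Forb_fin: "finite (Forb a b)" unfolding Forb_def using nb_fin by auto

lemma H_notin: "a \<in> A \<Longrightarrow> b \<notin> A \<Longrightarrow> E b a \<Longrightarrow> H a b \<notin> Forb a b"
  using H_eq least_notin[OF Forb_fin] by simp

lemma deg_le: "v \<in> V \<Longrightarrow> card (nb v) \<le> \<Delta>"
  using md by (auto simp: max_degree_def degree_def)

lemma rk_lt: assumes a: "a \<in> A" and b: "b \<in> nb a - A" shows "rk a b < d"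
proof -
  have "rk a b \<le> card {u \<in> nb a - A. ID u < ID b}" unfolding rk_def by (rule card_image_le) (simp add: nb_fin)
  also have "\<dots> \<le> card (nb a - {b})" by (rule card_mono) (auto simp: nb_fin)
  also have "\<dots> = card (nb a) - 1" using b nb_fin by simp
  also have "\<dots> < d" using degA a d1 b nb_fin card_gt_0_iff[of "nb a"] by (auto simp: degree_def)
  finally show ?thesis .
qed

lemma rk_less: assumes b1: "b1 \<in> nb a - A" and b2: "b2 \<in> nb a - A" and lt: "ID b1 < ID b2"
  shows "rk a b1 < rk a b2"
  unfolding rk_def
proof (rule psubset_card_mono)
  show "finite (ID ` {u \<in> nb a - A. ID u < ID b2})" using nb_fin by simp
  have "ID b1 \<notin> ID ` {u \<in> nb a - A. ID u < ID b1}" by auto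
  moreover have "ID b1 \<in> ID ` {u \<in> nb a - A. ID u < ID b2}" using b1 lt by auto
  ultimately show "ID ` {u \<in> nb a - A. ID u < ID b1} \<subset> ID ` {u \<in> nb a - A. ID u < ID b2}"
    using lt by auto
qed

lemma rk_neq: assumes b1: "b1 \<in> nb a - A" and b2: "b2 \<in> nb a - A" and ne: "b1 \<noteq> b2"
  shows "rk a b1 \<noteq> rk a b2"
proof -
  have "ID b1 \<noteq> ID b2" using IDeq ne b1 b2 EV nb_iff by blast
  then show ?thesis using rk_less[OF b1 b2] rk_less[OF b2 b1] by (cases "ID b1 < ID b2") auto
qed

lemma H_bound: assumes a: "a \<in> A" and b: "b \<notin> A" and ba: "E b a"
  shows "H a b + 2 \<le> \<Delta> + d"
proof -
  have sub: "Forb a b \<subseteq> (\<lambda>u. if u \<in> A then H u b else col b u) ` (nb b - {a}) \<union> H a ` (nb a - {b})"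
    unfolding Forb_def using a by (auto simp: lexl_def)
  have "H a b \<le> card (Forb a b)" using H_eq[OF a b ba] least_le_card[OF Forb_fin] by simp
  also have "\<dots> \<le> card ((\<lambda>u. if u \<in> A then H u b else col b u) ` (nb b - {a}) \<union> H a ` (nb a - {b}))"
    by (rule card_mono[OF _ sub]) (simp add: nb_fin)
  also have "\<dots> \<le> card (nb b - {a}) + card (nb a - {b})"
    by (rule order_trans[OF card_Un_le add_mono[OF card_image_le card_image_le]]) (auto simp: nb_fin)
  also have "\<dots> = (card (nb b) - 1) + (card (nb a) - 1)"
  proof -
    have "a \<in> nb b" "b \<in> nb a" using ba Esym[OF ba] nb_iff by auto
    then show ?thesis by (simp add: nb_fin)
  qed
  finally have h: "H a b \<le> (card (nb b) - 1) + (card (nb a) - 1)" .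
  have "a \<in> nb b" "b \<in> nb a" using ba Esym[OF ba] nb_iff by auto
  then have "card (nb b) \<ge> 1" "card (nb a) \<ge> 1" using nb_fin card_gt_0_iff
    by (metis One_nat_def Suc_leI empty_iff)+
  moreover have "card (nb b) \<le> \<Delta>" using deg_le EV ba by blast
  moreover have "card (nb a) \<le> d" using degA a by (auto simp: degree_def)
  ultimately show ?thesis using h by linarith
qed

end
definition pickp :: "view \<Rightarrow> nat \<Rightarrow> nat option \<times> view" where
  "pickp w x = (SOME p. p \<in> vk w \<and> vid (snd p) = x)"

definition algo :: "nat \<Rightarrow> nat \<Rightarrow> nat \<Rightarrow> view \<Rightarrow> nat \<Rightarrow> nat" where
  "algo c \<Delta> d w x = (let p = pickp w x; l = fst p; u = snd p in
     if vA w then (if vA u then the l + (\<Delta> + c*d + d) else Fv (rankv w x) u (vid w))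
     else (if vA u then Fv (rankv u (vid w)) w x else the l))"

context G begin

lemma pick: assumes vu: "E v u" shows "pickp (lv (Suc s) v) (ID u) = (edge_label A col v u, lv s u)"
  unfolding pickp_def
proof (rule some_equality)
  show "(edge_label A col v u, lv s u) \<in> vk (lv (Suc s) v) \<and> vid (snd (edge_label A col v u, lv s u)) = ID u"
    using vu nb_iff by (auto simp: vk_lv)
next
  fix p assume "p \<in> vk (lv (Suc s) v) \<and> vid (snd p) = ID u"
  then obtain u' where u': "u' \<in> nb v" "p = (edge_label A col v u', lv s u')" "ID u' = ID u"
    by (auto simp: vk_lv)
  then have "u' = u" using IDeq EV vu nb_iff by blast
  then show "p = (edge_label A col v u, lv s u)" using u' by simp
qed

definition outG :: "'v \<Rightarrow> 'v \<Rightarrow> nat" where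
  "outG v u = (if v \<in> A \<and> u \<in> A then col v u + (\<Delta> + c*d + d) else if v \<in> A then H v u
     else if u \<in> A then H u v else col v u)"

lemma out_eq: assumes vu: "E v u" and R: "2*d + 1 \<le> R"
  shows "algo c \<Delta> d (lv R v) (ID u) = outG v u"
proof -
  obtain s where s: "R = Suc s" "2*d \<le> s" using R by (intro that[of "R - 1"]) auto
  obtain s' where s': "s = Suc s'" using s d1 by (intro that[of "s - 1"]) auto
  have p: "pickp (lv R v) (ID u) = (edge_label A col v u, lv s u)" unfolding s by (rule pick[OF vu])
  have uv: "E u v" using Esym vu by blast
  show ?thesis
  proof (cases "v \<in> A")
    case vA: True
    show ?thesis
    proof (cases "u \<in> A")
      case True then show ?thesis using vA p by (simp add: algo_def outG_def edge_label_def)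
    next
      case uB: False
      have "rankv (lv R v) (ID u) = rk v u" unfolding s by (rule rankv_rk)
      moreover have "rk v u < d" using rk_lt[OF vA] uB vu nb_iff by auto
      then have "Fv (rk v u) (lv s u) (ID v) = H v u" using vA uB uv s by (intro Fv_H) auto
      ultimately show ?thesis using vA uB p by (simp add: algo_def outG_def)
    qed
  next
    case vB: False
    show ?thesis
    proof (cases "u \<in> A")
      case uA: True
      have "rankv (lv s u) (ID v) = rk u v" unfolding s' by (rule rankv_rk)
      moreover have "rk u v < d" using rk_lt[OF uA] vB uv nb_iff by auto
      then have "Fv (rk u v) (lv R v) (ID u) = H u v" using uA vB vu s by (intro Fv_H) auto
      ultimately show ?thesis using vB uA p by (simp add: algo_def outG_def)
    next
      case False then show ?thesis using vB p by (simp add: algo_def outG_def edge_label_def)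
    qed
  qed
qed

lemma colA: "u \<in> A \<Longrightarrow> v \<in> A \<Longrightarrow> E u v \<Longrightarrow> col u v = col v u \<and> col u v < c*d"
  using pA by (auto simp: proper_edge_col_on_def)
lemma colB: "u \<in> V - A \<Longrightarrow> v \<in> V - A \<Longrightarrow> E u v \<Longrightarrow> col u v = col v u \<and> col u v < \<Delta> + c*d"
  using pB by (auto simp: proper_edge_col_on_def)
lemma colA_d: "v \<in> A \<Longrightarrow> u \<in> A \<Longrightarrow> w \<in> A \<Longrightarrow> E v u \<Longrightarrow> E v w \<Longrightarrow> u \<noteq> w \<Longrightarrow> col v u \<noteq> col v w"
  using pA unfolding proper_edge_col_on_def by blast
lemma colB_d: "v \<in> V - A \<Longrightarrow> u \<in> V - A \<Longrightarrow> w \<in> V - A \<Longrightarrow> E v u \<Longrightarrow> E v w \<Longrightarrow> u \<noteq> w \<Longrightarrow> col v u \<noteq> col v w"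
  using pB unfolding proper_edge_col_on_def by blast

lemma outG_sym: assumes "E u v" shows "outG u v = outG v u \<and> outG u v < \<Delta> + (2*c+3)*d"
proof -
  have uv: "u \<in> V" "v \<in> V" "E v u" using EV Esym assms by auto
  show ?thesis
  proof (cases "u \<in> A"; cases "v \<in> A")
    assume "u \<in> A" "v \<in> A" then show ?thesis using colA[OF _ _ assms] by (auto simp: outG_def algebra_simps)
  next
    assume a: "u \<in> A" "v \<notin> A" then show ?thesis using H_bound[OF a uv(3)] by (auto simp: outG_def algebra_simps)
  next
    assume a: "u \<notin> A" "v \<in> A" then show ?thesis using H_bound[OF a(2) a(1) assms] by (auto simp: outG_def algebra_simps)
  next
    assume "u \<notin> A" "v \<notin> A" then show ?thesis using colB[OF _ _ assms] uv by (auto simp: outG_def algebra_simps)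
  qed
qed

lemma outG_dist: assumes vu: "E v u" and vw: "E v w" and ne: "u \<noteq> w" shows "outG v u \<noteq> outG v w"
proof -
  have V: "u \<in> V" "v \<in> V" "w \<in> V" using EV vu vw by auto
  have uv: "E u v" "E w v" using Esym vu vw by auto
  have nbs: "u \<in> nb v" "w \<in> nb v" using vu vw nb_iff by auto
  have gen: "outG v x \<noteq> outG v y" if vx: "E v x" and vy: "E v y" and xy: "x \<noteq> y" and
    sym: "x \<in> A \<or> y \<notin> A" for x y
  proof -
    have xV: "x \<in> V" "y \<in> V" using EV vx vy by auto
    have xn: "x \<in> nb v" "y \<in> nb v" using vx vy nb_iff by auto
    show ?thesis
    proof (cases "v \<in> A")
      case vA: True
      show ?thesis
      proof (cases "x \<in> A")
        case xA: True
        show ?thesis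
        proof (cases "y \<in> A")
          case True then show ?thesis using xA vA colA_d[OF vA xA True vx vy xy] by (simp add: outG_def)
        next
          case yB: False
          have "H v y + 2 \<le> \<Delta> + d" using H_bound[OF vA yB] Esym[OF vy] by blast
          then show ?thesis using xA vA yB by (simp add: outG_def)
        qed
      next
        case xB: False
        then have yB: "y \<notin> A" using sym by blast
        have xB': "x \<in> nb v - A" "y \<in> nb v - A" using xn xB yB by auto
        have "rk v x \<noteq> rk v y" by (rule rk_neq[OF xB' xy])
        then show ?thesis
        proof (cases "rk v x < rk v y")
          case True
          then have "H v x \<in> Forb v y" unfolding Forb_def using xB' xy by auto
          then show ?thesis using H_notin[OF vA yB Esym[OF vy]] vA xB yB by (auto simp: outG_def)
        next
          case False
          then have "rk v y < rk v x" using \<open>rk v x \<noteq> rk v y\<close> by simp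
          then have "H v y \<in> Forb v x" unfolding Forb_def using xB' xy by auto
          then show ?thesis using H_notin[OF vA xB Esym[OF vx]] vA xB yB by (auto simp: outG_def)
        qed
      qed
    next
      case vB: False
      show ?thesis
      proof (cases "x \<in> A")
        case xA: True
        show ?thesis
        proof (cases "y \<in> A")
          case yA: True
          have "ID x \<noteq> ID y" using IDeq xV xy by blast
          then have "lexl (rk x v) (ID x) (rk y v) (ID y) \<or> lexl (rk y v) (ID y) (rk x v) (ID x)"
            unfolding lexl_def by auto
          then show ?thesis
          proof
            assume "lexl (rk x v) (ID x) (rk y v) (ID y)"
            then have "H x v \<in> Forb y v" unfolding Forb_def using xn xA by auto
            then show ?thesis using H_notin[OF yA vB vy] vB xA yA by (auto simp: outG_def)
          next
            assume "lexl (rk y v) (ID y) (rk x v) (ID x)"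
            then have "H y v \<in> Forb x v" unfolding Forb_def using xn yA by auto
            then show ?thesis using H_notin[OF xA vB vx] vB xA yA by (auto simp: outG_def)
          qed
        next
          case yB: False
          have "col v y \<in> Forb x v" unfolding Forb_def using xn yB by auto
          then show ?thesis using H_notin[OF xA vB vx] vB xA yB by (auto simp: outG_def)
        qed
      next
        case xB: False
        then have yB: "y \<notin> A" using sym by blast
        show ?thesis using colB_d[of v x y] xV V vB xB yB vx vy xy by (simp add: outG_def)
      qed
    qed
  qed
  show ?thesis
  proof (cases "u \<in> A \<or> w \<notin> A")
    case True then show ?thesis using gen[OF vu vw ne] by blast
  next
    case False then have "w \<in> A \<or> u \<notin> A" by blast
    then show ?thesis using gen[OF vw vu ne[symmetric]] by metis
  qed
qed

end
theorem mainTheorem11: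
  fixes c k :: nat
  shows "\<exists>C::nat. \<exists>alg :: nat \<Rightarrow> nat \<Rightarrow> view \<Rightarrow> nat \<Rightarrow> nat.
    \<forall>(E :: 'v \<Rightarrow> 'v \<Rightarrow> bool) V A col ID \<Delta> d.
      simple_graph E V \<and> max_degree E V \<Delta> \<and> A \<subseteq> V \<and> d \<ge> 1 \<and>
      (\<forall>v\<in>A. degree E V v \<le> d) \<and>
      inj_on ID V \<and> (\<forall>v\<in>V. ID v < card V ^ k) \<and>
      proper_edge_col_on E V A col (c * d) \<and>
      proper_edge_col_on E V (V - A) col (\<Delta> + c * d)
      \<longrightarrow> local_output_ok alg (C * d) E V A col ID \<Delta> d (\<Delta> + C * d)"
proof (intro exI[of _ "2*c+3"] exI[of _ "algo c"] allI impI)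
  fix E :: "'v \<Rightarrow> 'v \<Rightarrow> bool" and V A col ID \<Delta> d
  assume h: "simple_graph E V \<and> max_degree E V \<Delta> \<and> A \<subseteq> V \<and> d \<ge> 1 \<and>
      (\<forall>v\<in>A. degree E V v \<le> d) \<and>
      inj_on ID V \<and> (\<forall>v\<in>V. ID v < card V ^ k) \<and>
      proper_edge_col_on E V A col (c * d) \<and>
      proper_edge_col_on E V (V - A) col (\<Delta> + c * d)"
  interpret g: G E V A col ID \<Delta> d c using h by unfold_locales auto
  have R: "2*d + 1 \<le> (2*c+3)*d" using h by (simp add: algebra_simps)
  show "local_output_ok (algo c) ((2*c+3) * d) E V A col ID \<Delta> d (\<Delta> + (2*c+3) * d)"
    unfolding local_output_ok_def Let_def
  proof (intro conjI allI impI)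
    fix u v assume uv: "E u v"
    have vu: "E v u" using g.Esym uv by blast
    show "algo c \<Delta> d (local_view E V A col ID ((2 * c + 3) * d) u) (ID v) =
      algo c \<Delta> d (local_view E V A col ID ((2 * c + 3) * d) v) (ID u)"
      using g.out_eq[OF uv R] g.out_eq[OF vu R] g.outG_sym[OF uv] by simp
    show "algo c \<Delta> d (local_view E V A col ID ((2 * c + 3) * d) u) (ID v) < \<Delta> + (2 * c + 3) * d"
      using g.out_eq[OF uv R] g.outG_sym[OF uv] by simp
  next
    fix v u w assume a: "E v u \<and> E v w \<and> u \<noteq> w"
    then show "algo c \<Delta> d (local_view E V A col ID ((2 * c + 3) * d) v) (ID u) \<noteq>
       algo c \<Delta> d (local_view E V A col ID ((2 * c + 3) * d) v) (ID w)"
      using g.out_eq[OF _ R] g.outG_dist by auto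
  qed
qed

end
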